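(* Let $\alpha_1\approx 0.24760367$ be the root in $[0,1]$ of $16\alpha^4+16\alpha^3-52\alpha^2+48\alpha-9=0$ and $\alpha_2\approx0.2797707433$ the root in $[0,1]$ of $8\alpha^4-8\alpha^3+8\alpha^2=1/2$, and let $\alpha_1\le\alpha\le\alpha_2$. If $(x,y)\in A_2$ and $G_\alpha^i(x,y)\in A_1$ for $i=1,2,3$, then $G_\alpha^4(x,y)\in A_2$; i.e., a point coming from $A_2$ remains in $A_1$ for at most $3$ consecutive steps.
   Context: Let $\tau:[0,1]\to[0,1]$ be the symmetric tent map, $\tau(x)=2x$ for $0\le x<1/2$ and $\tau(x)=2-2x$ for $1/2\le x\le 1$. For $0<\alpha<1$ define $G_\alpha:[0,1]^2\to[0,1]^2$ by $G_\alpha(x,y)=(y,\tau(\alpha y+(1-\alpha)x))$. Let $S(x,y)=\alpha y+(1-\alpha)x$, $A_1=\{(x,y)\in[0,1]^2: S(x,y)<1/2\}$ and $A_2=\{(x,y)\in[0,1]^2: S(x,y)\ge 1/2\}$. *)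

theory Defs
  imports Complex_Main
begin

definition tent :: "real \<Rightarrow> real" where
  "tent x = (if x < 1/2 then 2 * x else 2 - 2 * x)"

definition S :: "real \<Rightarrow> real \<times> real \<Rightarrow> real" where
  "S \<alpha> p = \<alpha> * snd p + (1 - \<alpha>) * fst p"

definition G :: "real \<Rightarrow> real \<times> real \<Rightarrow> real \<times> real" where
  "G \<alpha> p = (snd p, tent (S \<alpha> p))"

definition A1 :: "real \<Rightarrow> (real \<times> real) set" where
  "A1 \<alpha> = {p. p \<in> {0..1} \<times> {0..1} \<and> S \<alpha> p < 1/2}"

definition A2 :: "real \<Rightarrow> (real \<times> real) set" where
  "A2 \<alpha> = {p. p \<in> {0..1} \<times> {0..1} \<and> S \<alpha> p \<ge> 1/2}"

end

theory Submission
  imports Defs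
begin

lemma poly_bounds:
  fixes a :: real
  assumes "1/5 \<le> a" "a \<le> 1/2"
  shows "4*a*(8*a^4+12*a^2*(1-a)+2*(1-a)^2) \<ge> 1"
    and "8*a*(1-a)*(a^2+(1-a)) \<ge> 1/2"
proof -
  have q: "4*a^2 - 6*a + 1 \<le> 0"
  proof -
    have "(a-1/5)*(4*a - 26/5) \<le> 0" using assms by (intro mult_nonneg_nonpos) auto
    moreover have "4*a^2 - 6*a + 1 = (a-1/5)*(4*a - 26/5) - 1/25"
      by (simp add: field_simps power2_eq_square)
    ultimately show ?thesis by linarith
  qed
  have b: "8*a*(1-a)^2 \<ge> 1"
  proof -
    have "8*a*(1-a)^2 - 1 = (2*a - 1)*(4*a^2 - 6*a + 1)" by (simp add: algebra_simps power2_eq_square)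
    moreover have "(2*a - 1)*(4*a^2 - 6*a + 1) \<ge> 0" using q assms by (intro mult_nonpos_nonpos) auto
    ultimately show ?thesis by linarith
  qed
  have p: "a^5 \<ge> 0" "a^3*(1-a) \<ge> 0" "8*a*(1-a)*a^2 \<ge> 0" using assms by auto
  have e1: "4*a*(8*a^4+12*a^2*(1-a)+2*(1-a)^2) = 32*a^5 + 48*(a^3*(1-a)) + 8*a*(1-a)^2"
    by (simp add: algebra_simps power2_eq_square power3_eq_cube power4_eq_xxxx eval_nat_numeral)
  have e2: "8*a*(1-a)*(a^2+(1-a)) = 8*a*(1-a)*a^2 + 8*a*(1-a)^2"
    by (simp add: algebra_simps power2_eq_square)
  show "4*a*(8*a^4+12*a^2*(1-a)+2*(1-a)^2) \<ge> 1" using e1 b p by linarith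
  show "8*a*(1-a)*(a^2+(1-a)) \<ge> 1/2" using e2 b p by linarith
qed

theorem proposition9:
  fixes \<alpha>1 \<alpha>2 \<alpha> x y :: real
  assumes "\<alpha>1 \<in> {0..1}"
      and "16*\<alpha>1^4 + 16*\<alpha>1^3 - 52*\<alpha>1^2 + 48*\<alpha>1 - 9 = 0"
      and "\<alpha>2 \<in> {0..1}"
      and "8*\<alpha>2^4 - 8*\<alpha>2^3 + 8*\<alpha>2^2 = 1/2"
      and "0 < \<alpha>" and "\<alpha> < 1"
      and "\<alpha>1 \<le> \<alpha>" and "\<alpha> \<le> \<alpha>2"
      and "(x, y) \<in> A2 \<alpha>"
      and "\<forall>i\<in>{1,2,3::nat}. (G \<alpha> ^^ i) (x, y) \<in> A1 \<alpha>"
  shows "(G \<alpha> ^^ 4) (x, y) \<in> A2 \<alpha>"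
proof -
  have l1: "\<alpha>1 \<ge> 1/5"
  proof (rule ccontr)
    assume "\<not> ?thesis"
    hence "\<alpha>1 < 1/5" by simp
    have nn: "\<alpha>1 \<ge> 0" using assms(1) by simp
    have h4: "\<alpha>1^4 \<le> (1/5)^4" using nn \<open>\<alpha>1 < 1/5\<close> by (intro power_mono) auto
    have h3: "\<alpha>1^3 \<le> (1/5)^3" using nn \<open>\<alpha>1 < 1/5\<close> by (intro power_mono) auto
    have h2: "(1/5 - \<alpha>1)*(52*\<alpha>1 - 188/5) \<le> 0" using nn \<open>\<alpha>1 < 1/5\<close>
      by (intro mult_nonneg_nonpos) auto
    have h2e: "-52*\<alpha>1^2 + 48*\<alpha>1 - 188/25 = (1/5 - \<alpha>1)*(52*\<alpha>1 - 188/5)"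
      by (simp add: field_simps power2_eq_square)
    have "16*\<alpha>1^4 + 16*\<alpha>1^3 - 52*\<alpha>1^2 + 48*\<alpha>1 - 9 < 0"
      using h4 h3 h2 h2e by (simp add: power_divide)
    with assms(2) show False by simp
  qed
  have l2: "\<alpha>2 \<le> 1/2"
  proof (rule ccontr)
    assume "\<not> ?thesis"
    hence "\<alpha>2 > 1/2" by (simp add: power_divide)
    have g1: "\<alpha>2^2 - \<alpha>2 + 1 \<ge> 3/4"
    proof -
      have "\<alpha>2^2 - \<alpha>2 + 1 = (\<alpha>2 - 1/2)^2 + 3/4" by (simp add: algebra_simps power2_eq_square)
      thus ?thesis by simp
    qed
    have g2: "\<alpha>2^2 \<ge> (1/2)^2" using \<open>\<alpha>2 > 1/2\<close> by (intro power_mono) auto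
    have "\<alpha>2^2 * (\<alpha>2^2 - \<alpha>2 + 1) \<ge> (1/2)^2 * (3/4)"
      using g1 g2 by (intro mult_mono) auto
    moreover have "8*\<alpha>2^4 - 8*\<alpha>2^3 + 8*\<alpha>2^2 = 8*(\<alpha>2^2 * (\<alpha>2^2 - \<alpha>2 + 1))"
      by (simp add: algebra_simps power2_eq_square power3_eq_cube power4_eq_xxxx eval_nat_numeral)
    ultimately have "8*\<alpha>2^4 - 8*\<alpha>2^3 + 8*\<alpha>2^2 > 1/2" by (simp add: power_divide)
    with assms(4) show False by simp
  qed
  define a where "a = \<alpha>"
  have ar: "1/5 \<le> a" "a \<le> 1/2" using l1 l2 assms(7,8) a_def by auto
  note pb = poly_bounds[OF ar]
  define u where "u = tent (a*y + (1-a)*x)"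
  define z2 where "z2 = tent (a*u + (1-a)*y)"
  define z3 where "z3 = tent (a*z2 + (1-a)*u)"
  define z4 where "z4 = tent (a*z3 + (1-a)*z2)"
  have e1: "(G \<alpha> ^^ 1) (x,y) = (y,u)" by (simp add: G_def S_def u_def a_def)
  have e2: "(G \<alpha> ^^ 2) (x,y) = (u,z2)" by (simp add: G_def S_def u_def z2_def a_def numeral_eq_Suc)
  have e3: "(G \<alpha> ^^ 3) (x,y) = (z2,z3)" by (simp add: G_def S_def u_def z2_def z3_def a_def numeral_eq_Suc)
  have e4: "(G \<alpha> ^^ 4) (x,y) = (z3,z4)" by (simp add: G_def S_def u_def z2_def z3_def z4_def a_def numeral_eq_Suc)
  have m0: "x \<in> {0..1}" "y \<in> {0..1}" "a*y + (1-a)*x \<ge> 1/2"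
    using assms(9) by (auto simp: A2_def S_def a_def)
  have m1: "u \<in> {0..1}" "a*u + (1-a)*y < 1/2"
    using assms(10) e1 by (auto simp: A1_def S_def a_def)
  have m2: "z2 \<in> {0..1}" "a*z2 + (1-a)*u < 1/2"
    using assms(10) e2 by (auto simp: A1_def S_def a_def)
  have m3: "z3 \<in> {0..1}" "a*z3 + (1-a)*z2 < 1/2"
    using assms(10) e3 by (auto simp: A1_def S_def a_def)
  have uu: "u = 2 - 2*(a*y + (1-a)*x)" using m0 by (simp add: u_def tent_def)
  have zz2: "z2 = 2*(a*u + (1-a)*y)" using m1 by (simp add: z2_def tent_def)
  have zz3: "z3 = 2*(a*z2 + (1-a)*u)" using m2 by (simp add: z3_def tent_def)
  have zz4: "z4 = 2*(a*z3 + (1-a)*z2)" using m3 by (simp add: z4_def tent_def)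
  have s3nn: "a*z3 + (1-a)*z2 \<ge> 0" using m2 m3 ar by (simp add: mult_nonneg_nonneg)
  have z4r: "z4 \<in> {0..1}" using zz4 s3nn m3 by auto
  have con: "u + 2*a*y \<ge> 2*a" using uu m0 ar
  proof -
    have "(1-a)*x \<le> 1-a" using m0 ar by (simp add: mult_left_le)
    thus ?thesis using uu by (simp add: algebra_simps)
  qed
  define c4 where "c4 = 8*a^4+12*a^2*(1-a)+2*(1-a)^2"
  define d4 where "d4 = 8*a*(1-a)*(a^2+(1-a))"
  have S4: "a*z4 + (1-a)*z3 = c4*u + d4*y"
    unfolding zz4 zz3 zz2 c4_def d4_def by (simp add: algebra_simps power2_eq_square power3_eq_cube power4_eq_xxxx)
  have k1: "(4*a*c4 - 1)*u \<ge> 0" using pb(1) m1 c4_def by simp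
  have k2: "(2*d4 - 1)*(2*a*y) \<ge> 0" using pb(2) m0 ar d4_def by simp
  have "4*a*(c4*u + d4*y) \<ge> u + 2*a*y"
    using k1 k2 by (simp add: algebra_simps)
  hence "4*a*(c4*u + d4*y) \<ge> 2*a" using con by linarith
  hence "a*(4*(c4*u + d4*y) - 2) \<ge> 0" by (simp add: algebra_simps)
  hence "c4*u + d4*y \<ge> 1/2" using ar by (simp add: zero_le_mult_iff)
  hence "a*z4 + (1-a)*z3 \<ge> 1/2" using S4 by simp
  thus ?thesis using e4 m3 z4r by (simp add: A2_def S_def a_def)
qed

end
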